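(* Under the assumption $N_s,N_r\ge 2K+1$, let $\mathbf L_K$ denote the operator $\mathbf L$ of truncation order $K$. Then there is a constant $C>0$ independent of $K$ (depending on $k_0R$) such that $$\mathrm{cond}(\mathbf L_K)=\frac{\max_{|n|\le K}|d_n|}{\min_{|n|\le K}|d_n|}\le C\,(C_RK)^K\quad\text{for all sufficiently large }K,$$ where $C_R=2/(ek_0R)$.
   Context: Let $k_0>0$, $R>0$, $z_0\in\mathbb R^2$, $K\in\mathbb N$, $N_s,N_r\in\mathbb N$. Let $\theta_s=2\pi s/N_s$, $\xi_s=(\cos\theta_s,\sin\theta_s)$, $\theta_r=2\pi r/N_r$. Define $\mathbf A=(A_{sm})\in\mathbb C^{N_s\times(2K+1)}$, $\mathbf B=(B_{rn})\in\mathbb C^{N_r\times(2K+1)}$, $m,n=-K,\dots,K$, by $A_{sm}=e^{ik_0\xi_s\cdot z_0}e^{im(\pi/2-\theta_s)}$, $B_{rn}=\frac i4\overline{H_n^{(1)}(k_0R)}e^{-in\theta_r}$, with $H_n^{(1)}$ the Hankel function of the first kind, and $d_n=\frac i4H_n^{(1)}(k_0R)$. The operator $\mathbf L:\mathbb C^{(2K+1)\times(2K+1)}\to\mathbb C^{N_s\times N_r}$ is $\mathbf L(\mathbf X)=\mathbf A\mathbf X\mathbf B^H$ (Frobenius norms), and $\mathrm{cond}$ denotes the ratio of its largest to smallest singular value. *)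

theory Defs
  imports "HOL-Analysis.Analysis"
begin

text \<open>Bessel functions of integer order for real argument x > 0, via the
  integral representations DLMF 10.9.2 / 10.9.7 (specialised to integer order).\<close>

definition besselJ :: "int \<Rightarrow> real \<Rightarrow> real" where
  "besselJ n x = (1 / pi) * (LBINT t:{0..pi}. cos (real_of_int n * t - x * sin t))"

definition besselY :: "int \<Rightarrow> real \<Rightarrow> real" where
  "besselY n x =
     (1 / pi) * (LBINT t:{0..pi}. sin (x * sin t - real_of_int n * t))
   - (1 / pi) * (LBINT t:{0<..}. (exp (real_of_int n * t) + (-1) powi n * exp (- real_of_int n * t))
                                  * exp (- x * sinh t))"

definition hankel1 :: "int \<Rightarrow> real \<Rightarrow> complex" where
  "hankel1 n x = Complex (besselJ n x) (besselY n x)"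

text \<open>Matrices are represented as functions of integer indices; entries outside the
  relevant index ranges are irrelevant.  Rows s = 0..N_s-1, r = 0..N_r-1; columns
  m,n = -K..K.\<close>

definition Amat :: "real \<Rightarrow> real \<times> real \<Rightarrow> nat \<Rightarrow> int \<Rightarrow> int \<Rightarrow> complex" where
  "Amat k0 z0 Ns s m =
     (let \<theta> = 2 * pi * real_of_int s / real Ns in
      cis (k0 * (cos \<theta> * fst z0 + sin \<theta> * snd z0)) * cis (real_of_int m * (pi / 2 - \<theta>)))"

definition Bmat :: "real \<Rightarrow> real \<Rightarrow> nat \<Rightarrow> int \<Rightarrow> int \<Rightarrow> complex" where
  "Bmat k0 R Nr r n =
     (let \<theta> = 2 * pi * real_of_int r / real Nr in
      (\<i> / 4) * cnj (hankel1 n (k0 * R)) * cis (- real_of_int n * \<theta>))"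

definition dcoef :: "real \<Rightarrow> real \<Rightarrow> int \<Rightarrow> complex" where
  "dcoef k0 R n = (\<i> / 4) * hankel1 n (k0 * R)"

text \<open>L(X) = A X B^H, entry (s,r) = sum_{m,n} A_{sm} X_{mn} conj(B_{rn}).\<close>
definition Lop :: "real \<Rightarrow> real \<Rightarrow> real \<times> real \<Rightarrow> nat \<Rightarrow> nat \<Rightarrow> nat
                   \<Rightarrow> (int \<Rightarrow> int \<Rightarrow> complex) \<Rightarrow> (int \<Rightarrow> int \<Rightarrow> complex)" where
  "Lop k0 R z0 K Ns Nr X = (\<lambda>s r.
     \<Sum>m\<in>{-int K..int K}. \<Sum>n\<in>{-int K..int K}.
        Amat k0 z0 Ns s m * X m n * cnj (Bmat k0 R Nr r n))"

definition frob :: "int set \<Rightarrow> int set \<Rightarrow> (int \<Rightarrow> int \<Rightarrow> complex) \<Rightarrow> real" where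
  "frob I J X = sqrt (\<Sum>i\<in>I. \<Sum>j\<in>J. (cmod (X i j))\<^sup>2)"

definition Lratios :: "real \<Rightarrow> real \<Rightarrow> real \<times> real \<Rightarrow> nat \<Rightarrow> nat \<Rightarrow> nat \<Rightarrow> real set" where
  "Lratios k0 R z0 K Ns Nr =
     {frob {0..<int Ns} {0..<int Nr} (Lop k0 R z0 K Ns Nr X) / frob {-int K..int K} {-int K..int K} X
      | X. frob {-int K..int K} {-int K..int K} X \<noteq> 0}"

text \<open>Condition number = largest singular value / smallest singular value of the linear map
  L : C^{(2K+1)^2} -> C^{Ns x Nr}.  Since the domain dimension (2K+1)^2 does not exceed the
  codomain dimension Ns*Nr under the standing assumption, these are the maximal and minimal
  stretch factors ||L X|| / ||X||.\<close>
definition condL :: "real \<Rightarrow> real \<Rightarrow> real \<times> real \<Rightarrow> nat \<Rightarrow> nat \<Rightarrow> nat \<Rightarrow> real" where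
  "condL k0 R z0 K Ns Nr = Sup (Lratios k0 R z0 K Ns Nr) / Inf (Lratios k0 R z0 K Ns Nr)"

end

theory Submission
  imports Defs "HOL-Real_Asymp.Real_Asymp"
begin

definition Gc :: "real \<Rightarrow> real \<Rightarrow> real" where
  "Gc c t = 2 / (exp ((t - c)/2) + exp (-((t - c)/2)))"

lemma Gc_pos: "Gc c t > 0"
  unfolding Gc_def by (intro divide_pos_pos) (auto intro: add_pos_pos)

lemma Gc_cont: "continuous_on A (Gc c)"
  unfolding Gc_def by (intro continuous_intros) (auto intro: add_pos_pos simp: add_pos_pos[THEN less_imp_neq, symmetric])

lemma Gc_deriv: "((\<lambda>t. 4 * arctan (exp ((t - c)/2))) has_real_derivative Gc c t) (at t)"
proof -
  have "((\<lambda>t. 4 * arctan (exp ((t - c)/2))) has_real_derivative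
      4 * (inverse (1 + (exp ((t - c)/2))\<^sup>2) * (exp ((t - c)/2) * (1/2)))) (at t)"
    by (auto intro!: derivative_eq_intros)
  moreover have "4 * (inverse (1 + (exp ((t - c)/2))\<^sup>2) * (exp ((t - c)/2) * (1/2))) = Gc c t"
  proof -
    have e: "exp (-((t - c)/2)) = inverse (exp ((t - c)/2))" by (simp add: exp_minus)
    have p: "exp ((t - c)/2) > 0" by simp
    define u where "u = exp ((t - c)/2)"
    have u: "u > 0" using p u_def by simp
    have "4 * (inverse (1 + u\<^sup>2) * (u * (1/2))) = 2 / (u + inverse u)"
    proof -
      have d1: "1 + u\<^sup>2 \<noteq> 0" using u by (simp add: add_pos_nonneg[THEN less_imp_neq, symmetric])
      have d2: "u * u + 1 \<noteq> 0" using d1 by (simp add: power2_eq_square add.commute)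
      have "u + inverse u = (u*u + 1) / u" using u by (simp add: field_simps)
      then show ?thesis using u d1 d2 by (simp add: field_simps power2_eq_square)
    qed
    then show ?thesis unfolding Gc_def e u_def[symmetric] .
  qed
  ultimately show ?thesis by simp
qed

lemma Gc_integral: "(Gc c has_integral (2*pi - 4 * arctan (exp (-c/2)))) {0..}"
proof (rule has_integral_to_inf)
  show "Gc c integrable_on {0..y}" for y
    by (intro integrable_continuous_interval Gc_cont)
  have I: "integral {0..y} (Gc c) = 4 * arctan (exp ((y - c)/2)) - 4 * arctan (exp ((0 - c)/2))" if "y \<ge> 0" for y
    using that
    by (intro integral_unique fundamental_theorem_of_calculus)
       (auto intro!: Gc_deriv[THEN DERIV_subset] simp flip: has_real_derivative_iff_has_vector_derivative)
  have "((\<lambda>y. 4 * arctan (exp ((y - c)/2)) - 4 * arctan (exp ((0 - c)/2))) \<longlongrightarrow> 4 * (pi/2) - 4 * arctan (exp ((0 - c)/2))) at_top"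
  proof (intro tendsto_intros)
    have "filterlim (\<lambda>y. exp ((y - c)/2)) at_top at_top" by real_asymp
    then show "((\<lambda>y. arctan (exp ((y - c)/2))) \<longlongrightarrow> pi/2) at_top"
      using tendsto_arctan_at_top filterlim_compose by blast
  qed
  then have "((\<lambda>y. 4 * arctan (exp ((y - c)/2)) - 4 * arctan (exp ((0 - c)/2))) \<longlongrightarrow> 2*pi - 4 * arctan (exp (-c/2))) at_top"
    by simp
  then show "((\<lambda>y. integral {0..y} (Gc c)) \<longlongrightarrow> 2*pi - 4 * arctan (exp (-c/2))) at_top"
    by (rule Lim_transform_eventually) (auto simp: I eventually_at_top_linorder intro!: exI[of _ 0])
  show "0 \<le> Gc c y" for y using Gc_pos[of c y] by simp
qed

lemma Gc_integrable: "Gc c integrable_on {0..}"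
  using Gc_integral by blast

lemma Gc_integral_le: "integral {0..} (Gc c) \<le> 2*pi"
proof -
  have "arctan (exp (-c/2)) \<ge> 0" using arctan_monotone'[of 0 "exp (-c/2)"] by simp
  then show ?thesis using integral_unique[OF Gc_integral[of c]] by simp
qed

lemma env_aux: fixes s :: real shows "1 + s - exp s \<le> 1 - \<bar>s\<bar>/2"
proof (cases "s \<ge> 0")
  case True
  have "exp s = (exp (s/2))\<^sup>2" by (simp add: power2_eq_square flip: exp_add)
  also have "\<dots> \<ge> (1 + s/2)\<^sup>2"
    using True exp_ge_add_one_self[of "s/2"] by (intro power_mono) auto
  finally have "exp s \<ge> (1 + s/2)\<^sup>2" .
  moreover have "(1 + s/2)\<^sup>2 \<ge> 3/2 * s"
  proof -
    have "(1 + s/2)\<^sup>2 - 3/2 * s = (s/2 - 1/2)\<^sup>2 + 3/4" by (simp add: power2_eq_square algebra_simps)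
    moreover have "(s/2 - 1/2)\<^sup>2 \<ge> 0" by simp
    ultimately show ?thesis by linarith
  qed
  ultimately show ?thesis using True by simp
next
  case False
  have "0 < exp s" by simp
  then have "s \<le> exp s * 2" using False by linarith
  then show ?thesis using False by simp
qed

lemma env_pt:
  fixes m a t :: real
  assumes m: "m \<ge> 1" and a: "a > 0"
  shows "exp (m*t - a*exp t) \<le> exp (m * ln (m/a) - m) * exp 1 * Gc (ln (m/a)) t"
proof -
  define c where "c = ln (m/a)"
  define s where "s = t - c"
  have ec: "exp c = m/a" unfolding c_def using m a by simp
  have "exp t = exp c * exp s" unfolding s_def by (simp flip: exp_add)
  hence et: "a * exp t = m * exp s" using ec a by simp
  have "m*t - a*exp t = (m*c - m) + m * (1 + s - exp s)"
    unfolding et s_def by (simp add: algebra_simps)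
  also have "m * (1 + s - exp s) \<le> 1 * (1 + s - exp s)"
    using m exp_ge_add_one_self[of s] by (intro mult_right_mono_neg) auto
  also have "1 * (1 + s - exp s) \<le> 1 - \<bar>s\<bar>/2" using env_aux by simp
  finally have E: "m*t - a*exp t \<le> (m*c - m) + 1 - \<bar>s\<bar>/2" by simp
  have G: "exp (- \<bar>s\<bar>/2) \<le> Gc c t"
  proof -
    have "exp (s/2) + exp (-(s/2)) \<le> 2 * exp (\<bar>s\<bar>/2)"
      by (cases "s \<ge> 0") auto
    hence "exp (- \<bar>s\<bar>/2) * (exp (s/2) + exp (-(s/2))) \<le> exp (- \<bar>s\<bar>/2) * (2 * exp (\<bar>s\<bar>/2))"
      by (intro mult_left_mono) auto
    also have "\<dots> = 2" by (simp flip: exp_add)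
    finally show ?thesis unfolding Gc_def s_def[symmetric]
      by (simp add: field_simps add_pos_pos)
  qed
  have "exp (m*t - a*exp t) \<le> exp ((m*c - m) + 1 - \<bar>s\<bar>/2)" using E by simp
  also have "\<dots> = exp (m*c - m) * exp 1 * exp (- \<bar>s\<bar>/2)" by (simp flip: exp_add)
  also have "\<dots> \<le> exp (m*c - m) * exp 1 * Gc c t" using G by (intro mult_left_mono) auto
  finally show ?thesis unfolding c_def .
qed

lemma sinh_bound:
  fixes x t :: real assumes "x > 0" "t \<ge> 0"
  shows "exp (m*t - x * sinh t) \<le> exp (x/2) * exp (m*t - (x/2)*exp t)"
proof -
  have "exp (-t) \<le> 1" using assms by simp
  hence "x * sinh t \<ge> (x/2)*exp t - x/2" using assms(1) unfolding sinh_def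
    by (simp add: field_simps)
  hence "m*t - x * sinh t \<le> x/2 + (m*t - (x/2)*exp t)" by simp
  hence "exp (m*t - x * sinh t) \<le> exp (x/2 + (m*t - (x/2)*exp t))" by simp
  thus ?thesis by (simp add: exp_add)
qed

lemma env_full:
  fixes x t :: real and m :: nat assumes x: "x > 0" and t: "t \<ge> 0" and m: "m \<ge> 1"
  shows "exp (real m*t - x * sinh t) \<le> exp (x/2) * exp 1 * (2 * real m / (exp 1 * x)) ^ m * Gc (ln (real m/(x/2))) t"
proof -
  have "exp (real m*t - x * sinh t) \<le> exp (x/2) * exp (real m*t - (x/2)*exp t)" by (rule sinh_bound[OF x t])
  also have "\<dots> \<le> exp (x/2) * (exp (real m * ln (real m/(x/2)) - real m) * exp 1 * Gc (ln (real m/(x/2))) t)"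
    using m x by (intro mult_left_mono env_pt) auto
  also have "exp (real m * ln (real m/(x/2)) - real m) = (2 * real m / (exp 1 * x)) ^ m"
  proof -
    have "exp (real m * ln (real m/(x/2)) - real m) = exp (real m * ln (real m/(x/2))) / exp (real m)"
      by (simp add: exp_diff)
    also have "\<dots> = (real m/(x/2))^m / exp 1 ^ m" using m x
      by (simp add: exp_of_nat_mult flip: exp_of_nat_mult[of m 1])
    also have "\<dots> = (2 * real m / (exp 1 * x)) ^ m" by (simp add: power_divide field_simps)
    finally show ?thesis .
  qed
  finally show ?thesis by (simp add: mult_ac)
qed

lemma bridge:
  fixes f G :: "real \<Rightarrow> real"
  assumes cf: "continuous_on UNIV f" and G: "G integrable_on {0..}"
    and le: "\<And>t. t \<ge> 0 \<Longrightarrow> \<bar>f t\<bar> \<le> G t"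
  shows "set_integrable lborel {0<..} f" "(LBINT t:{0<..}. f t) = integral {0..} f"
    "f integrable_on {0..}" "\<bar>integral {0..} f\<bar> \<le> integral {0..} G"
proof -
  have m: "f \<in> borel_measurable (lebesgue_on {0..})"
    by (rule continuous_imp_measurable_on_sets_lebesgue) (auto intro: continuous_on_subset[OF cf])
  have ai: "f absolutely_integrable_on {0..}"
    by (rule measurable_bounded_by_integrable_imp_absolutely_integrable[OF m _ G]) (auto simp: le)
  have ai2: "set_integrable lebesgue {0<..} f"
    by (rule set_integrable_subset[OF ai]) auto
  have bf: "f \<in> borel_measurable borel" using cf by (rule borel_measurable_continuous_onI)
  have bm: "(\<lambda>x. indicator {0<..} x *\<^sub>R f x) \<in> borel_measurable lborel"
    using bf by measurable
  show si: "set_integrable lborel {0<..} f"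
    using ai2 integrable_completion[OF bm] unfolding set_integrable_def by simp
  show fi: "f integrable_on {0..}" using ai by (rule set_lebesgue_integral_eq_integral)
  have "(LBINT t:{0<..}. f t) = integral {0<..} f" by (rule set_borel_integral_eq_integral[OF si])
  also have "\<dots> = integral {0..} f"
    by (rule integral_spike_set) (auto intro: negligible_subset[of "{0}"])
  finally show "(LBINT t:{0<..}. f t) = integral {0..} f" .
  show "\<bar>integral {0..} f\<bar> \<le> integral {0..} G"
    using integral_norm_bound_integral[OF fi G, of ] le by auto
qed

lemma powi_abs1: "\<bar>(-1::real) powi n\<bar> = 1" by simp

lemma powi_cases: "(-1::real) powi n = 1 \<or> (-1::real) powi n = -1"
  using powi_abs1[of n] by linarith

definition gY :: "int \<Rightarrow> real \<Rightarrow> real \<Rightarrow> real" where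
  "gY n x t = (exp (real_of_int n * t) + (-1) powi n * exp (- real_of_int n * t)) * exp (- x * sinh t)"

lemma gY_cont: "continuous_on UNIV (gY n x)"
  unfolding gY_def by (intro continuous_intros)

lemma gY_pt:
  assumes "t \<ge> 0"
  shows "\<bar>gY n x t\<bar> \<le> 2 * exp (real (max 1 (nat \<bar>n\<bar>)) * t - x * sinh t)"
proof -
  define m where "m = real (max 1 (nat \<bar>n\<bar>))"
  have mn: "\<bar>real_of_int n\<bar> \<le> m" unfolding m_def by linarith
  have e1: "exp (real_of_int n * t) \<le> exp (m * t)"
    using assms mn by (intro exp_mono mult_right_mono) (auto simp: abs_le_iff)
  have e2: "exp (- real_of_int n * t) \<le> exp (m * t)"
  proof -
    have "(- real_of_int n) * t \<le> m * t" using assms mn by (intro mult_right_mono) (auto simp: abs_le_iff)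
    then show ?thesis by simp
  qed
  have "\<bar>exp (real_of_int n * t) + (-1) powi n * exp (- real_of_int n * t)\<bar>
        \<le> exp (real_of_int n * t) + \<bar>(-1) powi n\<bar> * exp (- real_of_int n * t)"
    by (rule order_trans[OF abs_triangle_ineq]) (simp add: abs_mult)
  also have "\<dots> \<le> 2 * exp (m * t)" unfolding powi_abs1 using e1 e2 by linarith
  finally have "\<bar>gY n x t\<bar> \<le> 2 * exp (m * t) * exp (- x * sinh t)"
    unfolding gY_def abs_mult by (simp add: mult_right_mono)
  also have "\<dots> = 2 * exp (m * t - x * sinh t)" by (simp add: exp_diff exp_minus field_simps)
  finally show ?thesis unfolding m_def .
qed

lemma besselY_split:
  "besselY n x = (1/pi) * (LBINT t:{0..pi}. sin (x * sin t - real_of_int n * t)) - (1/pi) * (LBINT t:{0<..}. gY n x t)"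
  unfolding besselY_def gY_def by simp

lemma first_part_bound:
  fixes h :: "real \<Rightarrow> real"
  assumes "continuous_on UNIV h" "\<And>t. \<bar>h t\<bar> \<le> 1"
  shows "\<bar>(1/pi) * (LBINT t:{0..pi}. h t)\<bar> \<le> 1"
proof -
  have si: "set_integrable lborel {0..pi} h"
    by (rule borel_integrable_atLeastAtMost') (rule continuous_on_subset[OF assms(1)], simp)
  have eq: "(LBINT t:{0..pi}. h t) = integral {0..pi} h" by (rule set_borel_integral_eq_integral[OF si])
  have hi: "h integrable_on {0..pi}" by (rule set_borel_integral_eq_integral[OF si])
  have "norm (integral {0..pi} h) \<le> integral {0..pi} (\<lambda>_. 1::real)"
    by (rule integral_norm_bound_integral[OF hi]) (use assms(2) in auto)
  also have "\<dots> = pi" by simp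
  finally have "\<bar>integral {0..pi} h\<bar> \<le> pi" by simp
  then show ?thesis unfolding eq using pi_gt_zero by (simp add: abs_mult field_simps)
qed

lemma besselJ_bound: "\<bar>besselJ n x\<bar> \<le> 1"
  unfolding besselJ_def by (rule first_part_bound) (auto intro!: continuous_intros)

lemma gY_integrable:
  assumes x: "x > 0"
  shows "set_integrable lborel {0<..} (gY n x)" "(LBINT t:{0<..}. gY n x t) = integral {0..} (gY n x)"
    "gY n x integrable_on {0..}"
    "\<bar>integral {0..} (gY n x)\<bar> \<le> 4 * pi * (exp (x/2) * exp 1 * (2 * real (max 1 (nat \<bar>n\<bar>)) / (exp 1 * x)) ^ (max 1 (nat \<bar>n\<bar>)))"
proof -
  define m where "m = max 1 (nat \<bar>n\<bar>)"
  define K where "K = exp (x/2) * exp 1 * (2 * real m / (exp 1 * x)) ^ m"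
  define c where "c = ln (real m/(x/2))"
  have Kp: "K \<ge> 0" unfolding K_def using x by simp
  define G where "G = (\<lambda>t. 2 * K * Gc c t)"
  have GI: "G integrable_on {0..}" unfolding G_def using integrable_on_cmult_left[OF Gc_integrable, of "2*K" c] by simp
  have le: "\<bar>gY n x t\<bar> \<le> G t" if "t \<ge> 0" for t
  proof -
    have "\<bar>gY n x t\<bar> \<le> 2 * exp (real m * t - x * sinh t)" using gY_pt[OF that] unfolding m_def .
    also have "\<dots> \<le> 2 * (K * Gc c t)" unfolding K_def c_def
      by (intro mult_left_mono env_full x that) (auto simp: m_def)
    finally show ?thesis unfolding G_def by simp
  qed
  note B = bridge[OF gY_cont GI le]
  show "set_integrable lborel {0<..} (gY n x)" "(LBINT t:{0<..}. gY n x t) = integral {0..} (gY n x)"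
    "gY n x integrable_on {0..}" using B by auto
  have "integral {0..} G = 2 * K * integral {0..} (Gc c)" unfolding G_def by simp
  also have "\<dots> \<le> 2 * K * (2 * pi)" using Gc_integral_le Kp by (intro mult_left_mono) auto
  finally have "\<bar>integral {0..} (gY n x)\<bar> \<le> 2 * K * (2 * pi)" using B(4) by linarith
  then have "\<bar>integral {0..} (gY n x)\<bar> \<le> 4 * pi * K" by (simp add: mult_ac)
  then show "\<bar>integral {0..} (gY n x)\<bar> \<le> 4 * pi * (exp (x/2) * exp 1 * (2 * real (max 1 (nat \<bar>n\<bar>)) / (exp 1 * x)) ^ (max 1 (nat \<bar>n\<bar>)))"
    unfolding K_def m_def .
qed

lemma besselY_upper:
  assumes x: "x > 0"
  shows "\<bar>besselY n x\<bar> \<le> 1 + 4 * (exp (x/2) * exp 1 * (2 * real (max 1 (nat \<bar>n\<bar>)) / (exp 1 * x)) ^ (max 1 (nat \<bar>n\<bar>)))"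
proof -
  note I = gY_integrable[OF x, of n]
  have P: "\<bar>(1/pi) * (LBINT t:{0..pi}. sin (x * sin t - real_of_int n * t))\<bar> \<le> 1"
    by (rule first_part_bound) (auto intro!: continuous_intros)
  have Q: "\<bar>(1/pi) * (LBINT t:{0<..}. gY n x t)\<bar> \<le> 4 * (exp (x/2) * exp 1 * (2 * real (max 1 (nat \<bar>n\<bar>)) / (exp 1 * x)) ^ (max 1 (nat \<bar>n\<bar>)))"
    using I(4) pi_gt_zero unfolding I(2) by (simp add: abs_mult field_simps)
  show ?thesis unfolding besselY_split using P Q by linarith
qed

lemma gY_sign:
  obtains \<sigma> :: real where "\<bar>\<sigma>\<bar> = 1"
    "\<And>t. t \<ge> 0 \<Longrightarrow> \<sigma> * gY n x t \<ge> (exp (\<bar>real_of_int n\<bar> * t) - exp (- \<bar>real_of_int n\<bar> * t)) * exp (- x * sinh t)"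
proof -
  define N where "N = real_of_int n"
  have w: "exp (- x * sinh t) > 0" for t by simp
  consider "(-1::real) powi n = 1" | "(-1::real) powi n = -1" "n \<ge> 0" | "(-1::real) powi n = -1" "n < 0"
    using powi_cases[of n] by linarith
  then show ?thesis
  proof cases
    case 1
    show ?thesis
    proof (rule that[of 1])
      fix t :: real assume t: "t \<ge> 0"
      have "exp (\<bar>N\<bar> * t) - exp (- \<bar>N\<bar> * t) \<le> exp (N * t) + exp (- N * t)"
        by (cases "N \<ge> 0") auto
      then show "1 * gY n x t \<ge> (exp (\<bar>real_of_int n\<bar> * t) - exp (- \<bar>real_of_int n\<bar> * t)) * exp (- x * sinh t)"
        unfolding gY_def 1 N_def using w[of t] by (simp add: mult_right_mono)
    qed simp
  next
    case 2
    show ?thesis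
    proof (rule that[of 1])
      fix t :: real assume t: "t \<ge> 0"
      show "1 * gY n x t \<ge> (exp (\<bar>real_of_int n\<bar> * t) - exp (- \<bar>real_of_int n\<bar> * t)) * exp (- x * sinh t)"
        unfolding gY_def 2 using 2 by simp
    qed simp
  next
    case 3
    show ?thesis
    proof (rule that[of "-1"])
      fix t :: real assume t: "t \<ge> 0"
      show "-1 * gY n x t \<ge> (exp (\<bar>real_of_int n\<bar> * t) - exp (- \<bar>real_of_int n\<bar> * t)) * exp (- x * sinh t)"
        unfolding gY_def 3 using 3 by (simp add: algebra_simps)
    qed simp
  qed
qed

lemma besselY_lower:
  assumes x: "x > 0" and n: "\<bar>real_of_int n\<bar> \<ge> 2 * pi * exp (x * sinh 2)"
  shows "\<bar>besselY n x\<bar> \<ge> 1"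
proof -
  define N where "N = \<bar>real_of_int n\<bar>"
  note I = gY_integrable[OF x, of n]
  obtain \<sigma> :: real where s1: "\<bar>\<sigma>\<bar> = 1" and sg: "\<And>t. t \<ge> 0 \<Longrightarrow> \<sigma> * gY n x t \<ge> (exp (N * t) - exp (- N * t)) * exp (- x * sinh t)"
    using gY_sign[of n x] unfolding N_def by blast
  define L where "L = (exp N - 1) * exp (- x * sinh 2)"
  have N0: "N \<ge> 0" unfolding N_def by simp
  have nn: "\<sigma> * gY n x t \<ge> 0" if "t \<ge> 0" for t
  proof -
    have "exp (- N * t) \<le> exp (N * t)" using that N0 by simp
    then show ?thesis using sg[OF that] by (smt (verit) exp_gt_zero mult_nonneg_nonneg)
  qed
  have ptL: "\<sigma> * gY n x t \<ge> L" if "t \<in> {1..2}" for t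
  proof -
    from that have t1: "t \<ge> 1" "t \<le> 2" by auto
    have a: "exp N \<le> exp (N * t)" using t1 N0 by (simp add: mult_le_cancel_left1)
    have b: "exp (- N * t) \<le> 1" using t1 N0 by simp
    have c: "exp (- x * sinh 2) \<le> exp (- x * sinh t)" using t1 x by simp
    have d: "exp N - 1 \<le> exp (N * t) - exp (- N * t)" using a b by linarith
    have "L \<le> (exp (N * t) - exp (- N * t)) * exp (- x * sinh t)" unfolding L_def
      using d c N0 t1 by (intro mult_mono) auto
    then show ?thesis using sg[of t] t1 by simp
  qed
  have int12: "gY n x integrable_on {1..2}"
    by (rule integrable_continuous_interval) (rule continuous_on_subset[OF gY_cont], simp)
  have intS: "(\<lambda>t. \<sigma> * gY n x t) integrable_on {0..}"
    using integrable_on_cmult_left[OF I(3), of \<sigma>] by simp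
  have intS12: "(\<lambda>t. \<sigma> * gY n x t) integrable_on {1..2}"
    using integrable_on_cmult_left[OF int12, of \<sigma>] by simp
  have "L = integral {1..2::real} (\<lambda>_. L)" by simp
  also have "\<dots> \<le> integral {1..2} (\<lambda>t. \<sigma> * gY n x t)"
    by (rule integral_le[OF _ intS12]) (auto simp: ptL)
  also have "\<dots> \<le> integral {0..} (\<lambda>t. \<sigma> * gY n x t)"
    by (rule integral_subset_le[OF _ intS12 intS]) (auto simp: nn)
  also have "\<dots> = \<sigma> * integral {0..} (gY n x)" by simp
  also have "\<dots> \<le> \<bar>integral {0..} (gY n x)\<bar>" 
  proof -
    have "\<sigma> * integral {0..} (gY n x) \<le> \<bar>\<sigma> * integral {0..} (gY n x)\<bar>" by (rule abs_ge_self)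
    also have "\<dots> = \<bar>integral {0..} (gY n x)\<bar>" using s1 by (simp add: abs_mult)
    finally show ?thesis .
  qed
  finally have QL: "L \<le> \<bar>integral {0..} (gY n x)\<bar>" .
  have "N \<le> exp N - 1" using exp_ge_add_one_self[of N] by linarith
  hence "N * exp (- x * sinh 2) \<le> L" unfolding L_def by (intro mult_right_mono) auto
  moreover have "2 * pi \<le> N * exp (- x * sinh 2)"
  proof -
    have "2 * pi * exp (x * sinh 2) * exp (- x * sinh 2) \<le> N * exp (- x * sinh 2)"
      using n unfolding N_def by (intro mult_right_mono) auto
    thus ?thesis by (simp add: mult.assoc flip: exp_add)
  qed
  ultimately have Q2: "2 * pi \<le> \<bar>integral {0..} (gY n x)\<bar>" using QL by linarith
  have P: "\<bar>(1/pi) * (LBINT t:{0..pi}. sin (x * sin t - real_of_int n * t))\<bar> \<le> 1"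
    by (rule first_part_bound) (auto intro!: continuous_intros)
  have Q: "\<bar>(1/pi) * (LBINT t:{0<..}. gY n x t)\<bar> \<ge> 2"
    using Q2 pi_gt_zero unfolding I(2) by (simp add: abs_mult field_simps)
  show ?thesis unfolding besselY_split using P Q by linarith
qed


lemma sum_int_range: "(\<Sum>r\<in>{0..<int N}. f r) = (\<Sum>r<N. f (int r))"
proof -
  have "{0..<int N} = int ` {0..<N}" by (simp add: image_int_atLeastLessThan)
  then show ?thesis by (simp add: sum.reindex lessThan_atLeast0)
qed

lemma geom_cis:
  fixes k :: int
  assumes N: "N > 0" and k: "\<bar>k\<bar> < int N"
  shows "(\<Sum>r\<in>{0..<int N}. cis (real_of_int k * (2 * pi * real_of_int r / real N)))
         = (if k = 0 then of_nat N else 0)"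
proof (cases "k = 0")
  case True then show ?thesis by simp
next
  case False
  define \<omega> where "\<omega> = cis (2 * pi * real_of_int k / real N)"
  have pw: "cis (real_of_int k * (2 * pi * real_of_int (int r) / real N)) = \<omega> ^ r" for r
    unfolding \<omega>_def by (subst Complex.DeMoivre) (simp add: field_simps)
  have w1: "\<omega> \<noteq> 1"
  proof
    assume "\<omega> = 1"
    then have "cos (2 * pi * real_of_int k / real N) = 1" unfolding \<omega>_def
      by (metis complex.sel(1) cis.sel(1) one_complex.sel(1))
    then obtain j :: int where j: "2 * pi * real_of_int k / real N = real_of_int j * 2 * pi"
      by (auto simp: cos_one_2pi_int)
    then have "real_of_int k = real_of_int j * real N" using N by (simp add: field_simps)
    then have kj: "k = j * int N" by (metis of_int_eq_iff of_int_mult of_int_of_nat_eq)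
    show False
    proof (cases "j = 0")
      case True then show False using kj False by simp
    next
      case False
      then have "\<bar>j\<bar> \<ge> 1" by linarith
      then have "\<bar>k\<bar> \<ge> int N" unfolding kj abs_mult using N by (simp add: mult_le_cancel_right1)
      then show False using k by simp
    qed
  qed
  have wN: "\<omega> ^ N = 1"
  proof -
    have "\<omega> ^ N = cis (real N * (2 * pi * real_of_int k / real N))" unfolding \<omega>_def Complex.DeMoivre ..
    also have "\<dots> = cis (2 * pi * real_of_int k)" using N by simp
    also have "\<dots> = 1" by (rule cis_multiple_2pi) simp
    finally show ?thesis .
  qed
  have "(\<Sum>r\<in>{0..<int N}. cis (real_of_int k * (2 * pi * real_of_int r / real N))) = (\<Sum>r<N. \<omega> ^ r)"
    unfolding sum_int_range pw ..
  also have "\<dots> = 0" using geometric_sum[OF w1, of N] wN by simp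
  finally show ?thesis using False by simp
qed

lemma parseval:
  fixes c :: "int \<Rightarrow> complex" and \<epsilon> :: int
  assumes N: "N \<ge> 2*K+1" and e: "\<bar>\<epsilon>\<bar> = 1"
  shows "(\<Sum>r\<in>{0..<int N}. (cmod (\<Sum>n\<in>{-int K..int K}. c n * cis (real_of_int (\<epsilon>*n) * (2*pi*real_of_int r/real N))))\<^sup>2)
         = real N * (\<Sum>n\<in>{-int K..int K}. (cmod (c n))\<^sup>2)"
proof -
  define I where "I = {-int K..int K}"
  define th where "th r = 2*pi*real_of_int r/real N" for r :: int
  define S where "S r = (\<Sum>n\<in>I. c n * cis (real_of_int (\<epsilon>*n) * th r))" for r
  have SS: "S r * cnj (S r) = (\<Sum>n\<in>I. \<Sum>n'\<in>I. c n * cnj (c n') * cis (real_of_int (\<epsilon>*(n-n')) * th r))" for r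
  proof -
    have "S r * cnj (S r) = (\<Sum>n\<in>I. \<Sum>n'\<in>I. (c n * cis (real_of_int (\<epsilon>*n) * th r)) * cnj (c n' * cis (real_of_int (\<epsilon>*n') * th r)))"
      unfolding S_def cnj_sum by (rule sum_product)
    also have "\<dots> = (\<Sum>n\<in>I. \<Sum>n'\<in>I. c n * cnj (c n') * cis (real_of_int (\<epsilon>*(n-n')) * th r))"
    proof (intro sum.cong refl)
      fix n n'
      have "cis (real_of_int (\<epsilon>*n) * th r) * cnj (cis (real_of_int (\<epsilon>*n') * th r)) = cis (real_of_int (\<epsilon>*(n-n')) * th r)"
        unfolding cis_cnj cis_mult by (simp add: algebra_simps)
      then show "c n * cis (real_of_int (\<epsilon>*n) * th r) * cnj (c n' * cis (real_of_int (\<epsilon>*n') * th r)) = c n * cnj (c n') * cis (real_of_int (\<epsilon>*(n-n')) * th r)"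
        by (simp add: mult_ac)
    qed
    finally show ?thesis .
  qed
  have G: "(\<Sum>r\<in>{0..<int N}. cis (real_of_int (\<epsilon>*(n-n')) * th r)) = (if n = n' then of_nat N else 0)"
    if "n \<in> I" "n' \<in> I" for n n'
  proof -
    have "int N \<ge> 2 * int K + 1" using N by linarith
    then have "\<bar>\<epsilon>*(n-n')\<bar> < int N" using that e unfolding I_def by (simp add: abs_mult) linarith
    moreover have "(\<epsilon>*(n-n') = 0) = (n = n')" using e by auto
    ultimately show ?thesis unfolding th_def using geom_cis[of N "\<epsilon>*(n-n')"] N by auto
  qed
  have "complex_of_real (\<Sum>r\<in>{0..<int N}. (cmod (S r))\<^sup>2) = (\<Sum>r\<in>{0..<int N}. S r * cnj (S r))"
    unfolding of_real_sum by (intro sum.cong refl) (rule complex_norm_square)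
  also have "\<dots> = (\<Sum>r\<in>{0..<int N}. \<Sum>n\<in>I. \<Sum>n'\<in>I. c n * cnj (c n') * cis (real_of_int (\<epsilon>*(n-n')) * th r))"
    unfolding SS ..
  also have "\<dots> = (\<Sum>n\<in>I. \<Sum>n'\<in>I. \<Sum>r\<in>{0..<int N}. c n * cnj (c n') * cis (real_of_int (\<epsilon>*(n-n')) * th r))"
    by (subst sum.swap) (subst (2) sum.swap, rule refl)
  also have "\<dots> = (\<Sum>n\<in>I. \<Sum>n'\<in>I. c n * cnj (c n') * (if n = n' then of_nat N else 0))"
  proof (intro sum.cong refl)
    fix n n' assume nn: "n \<in> I" "n' \<in> I"
    show "(\<Sum>r\<in>{0..<int N}. c n * cnj (c n') * cis (real_of_int (\<epsilon>*(n-n')) * th r)) = c n * cnj (c n') * (if n = n' then of_nat N else 0)"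
      unfolding sum_distrib_left[symmetric] G[OF nn] ..
  qed
  also have "\<dots> = (\<Sum>n\<in>I. c n * cnj (c n) * of_nat N)"
    by (intro sum.cong refl) (simp add: if_distrib I_def cong: if_cong)
  also have "\<dots> = complex_of_real (real N * (\<Sum>n\<in>I. (cmod (c n))\<^sup>2))"
    unfolding of_real_mult of_real_sum sum_distrib_left
    by (intro sum.cong refl) (simp add: complex_norm_square[symmetric] mult_ac)
  finally show ?thesis unfolding S_def th_def I_def of_real_eq_iff .
qed

lemma Lop_entry:
  fixes X :: "int \<Rightarrow> int \<Rightarrow> complex" and k0 R :: real and z0 :: "real \<times> real" and K Ns Nr :: nat and s r :: int
  defines "e \<equiv> \<lambda>s. cis (k0 * (cos (2 * pi * real_of_int s / real Ns) * fst z0 + sin (2 * pi * real_of_int s / real Ns) * snd z0))"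
  defines "Y \<equiv> \<lambda>m n. cis (real_of_int m * (pi/2)) * X m n * dcoef k0 R n"
  defines "W \<equiv> \<lambda>s n. \<Sum>m\<in>{-int K..int K}. Y m n * cis (real_of_int ((-1)*m) * (2*pi*real_of_int s/real Ns))"
  shows "Lop k0 R z0 K Ns Nr X s r = - e s * (\<Sum>n\<in>{-int K..int K}. W s n * cis (real_of_int (1*n) * (2*pi*real_of_int r/real Nr)))"
proof -
  define I where "I = {-int K..int K}"
  define ts where "ts = 2 * pi * real_of_int s / real Ns"
  define tr where "tr = 2 * pi * real_of_int r / real Nr"
  have A: "Amat k0 z0 Ns s m = e s * cis (real_of_int m * (pi/2)) * cis (real_of_int ((-1)*m) * ts)" for m
  proof -
    have "cis (real_of_int m * (pi / 2 - ts)) = cis (real_of_int m * (pi/2)) * cis (real_of_int ((-1)*m) * ts)"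
      unfolding cis_mult by (simp add: algebra_simps)
    then show ?thesis unfolding Amat_def Let_def e_def ts_def by (simp add: mult.assoc)
  qed
  have B: "cnj (Bmat k0 R Nr r n) = - dcoef k0 R n * cis (real_of_int (1*n) * tr)" for n
    unfolding Bmat_def Let_def dcoef_def tr_def by (simp add: cis_cnj)
  have "Lop k0 R z0 K Ns Nr X s r = (\<Sum>m\<in>I. \<Sum>n\<in>I. - e s * (Y m n * cis (real_of_int ((-1)*m) * ts) * cis (real_of_int (1*n) * tr)))"
    unfolding Lop_def I_def[symmetric] A B Y_def by (intro sum.cong refl) (simp add: mult_ac)
  also have "\<dots> = (\<Sum>n\<in>I. \<Sum>m\<in>I. - e s * (Y m n * cis (real_of_int ((-1)*m) * ts) * cis (real_of_int (1*n) * tr)))"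
    by (rule sum.swap)
  also have "\<dots> = - e s * (\<Sum>n\<in>I. W s n * cis (real_of_int (1*n) * tr))"
    unfolding W_def I_def[symmetric] ts_def[symmetric] sum_distrib_left sum_distrib_right ..
  finally show ?thesis unfolding I_def tr_def .
qed

lemma Lop_sq:
  fixes X :: "int \<Rightarrow> int \<Rightarrow> complex"
  assumes Ns: "Ns \<ge> 2*K+1" and Nr: "Nr \<ge> 2*K+1"
  shows "(\<Sum>s\<in>{0..<int Ns}. \<Sum>r\<in>{0..<int Nr}. (cmod (Lop k0 R z0 K Ns Nr X s r))\<^sup>2)
       = real Ns * real Nr * (\<Sum>m\<in>{-int K..int K}. \<Sum>n\<in>{-int K..int K}. (cmod (X m n))\<^sup>2 * (cmod (dcoef k0 R n))\<^sup>2)"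
proof -
  define I where "I = {-int K..int K}"
  define Y where "Y = (\<lambda>m n. cis (real_of_int m * (pi/2)) * X m n * dcoef k0 R n)"
  define W where "W = (\<lambda>s n. \<Sum>m\<in>{-int K..int K}. Y m n * cis (real_of_int ((-1)*m) * (2*pi*real_of_int s/real Ns)))"
  have L: "cmod (Lop k0 R z0 K Ns Nr X s r) = cmod (\<Sum>n\<in>I. W s n * cis (real_of_int (1*n) * (2*pi*real_of_int r/real Nr)))" for s r
    unfolding Lop_entry W_def Y_def I_def norm_mult norm_minus_cancel by simp
  have "(\<Sum>s\<in>{0..<int Ns}. \<Sum>r\<in>{0..<int Nr}. (cmod (Lop k0 R z0 K Ns Nr X s r))\<^sup>2)
      = (\<Sum>s\<in>{0..<int Ns}. real Nr * (\<Sum>n\<in>I. (cmod (W s n))\<^sup>2))"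
    unfolding L I_def using parseval[OF Nr, of 1] by simp
  also have "\<dots> = real Nr * (\<Sum>s\<in>{0..<int Ns}. \<Sum>n\<in>I. (cmod (W s n))\<^sup>2)"
    by (simp add: sum_distrib_left)
  also have "\<dots> = real Nr * (\<Sum>n\<in>I. \<Sum>s\<in>{0..<int Ns}. (cmod (W s n))\<^sup>2)"
    by (subst sum.swap) (rule refl)
  also have "\<dots> = real Nr * (\<Sum>n\<in>I. real Ns * (\<Sum>m\<in>I. (cmod (Y m n))\<^sup>2))"
    unfolding W_def I_def using parseval[OF Ns, of "-1"] by simp
  also have "\<dots> = real Ns * real Nr * (\<Sum>m\<in>I. \<Sum>n\<in>I. (cmod (X m n))\<^sup>2 * (cmod (dcoef k0 R n))\<^sup>2)"
  proof -
    have y: "(\<Sum>m\<in>I. (cmod (Y m n))\<^sup>2) = (\<Sum>m\<in>I. (cmod (X m n))\<^sup>2 * (cmod (dcoef k0 R n))\<^sup>2)" for n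
      unfolding Y_def norm_mult by (simp add: power_mult_distrib)
    have "real Nr * (\<Sum>n\<in>I. real Ns * (\<Sum>m\<in>I. (cmod (Y m n))\<^sup>2))
        = real Ns * real Nr * (\<Sum>n\<in>I. \<Sum>m\<in>I. (cmod (X m n))\<^sup>2 * (cmod (dcoef k0 R n))\<^sup>2)"
      unfolding y by (simp add: sum_distrib_left mult_ac)
    also have "\<dots> = real Ns * real Nr * (\<Sum>m\<in>I. \<Sum>n\<in>I. (cmod (X m n))\<^sup>2 * (cmod (dcoef k0 R n))\<^sup>2)"
      by (subst sum.swap) (rule refl)
    finally show ?thesis .
  qed
  finally show ?thesis unfolding I_def .
qed

lemma sum_sq_bounds:
  fixes X :: "int \<Rightarrow> int \<Rightarrow> complex" and d :: "int \<Rightarrow> real" and I :: "int set"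
  assumes "finite I" "\<And>n. n \<in> I \<Longrightarrow> lo \<le> d n" "\<And>n. n \<in> I \<Longrightarrow> d n \<le> hi" "lo \<ge> 0"
  shows "lo\<^sup>2 * (\<Sum>m\<in>I. \<Sum>n\<in>I. (cmod (X m n))\<^sup>2) \<le> (\<Sum>m\<in>I. \<Sum>n\<in>I. (cmod (X m n))\<^sup>2 * (d n)\<^sup>2)"
        "(\<Sum>m\<in>I. \<Sum>n\<in>I. (cmod (X m n))\<^sup>2 * (d n)\<^sup>2) \<le> hi\<^sup>2 * (\<Sum>m\<in>I. \<Sum>n\<in>I. (cmod (X m n))\<^sup>2)"
proof -
  have a: "lo\<^sup>2 \<le> (d n)\<^sup>2" "(d n)\<^sup>2 \<le> hi\<^sup>2" if "n \<in> I" for n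
    using assms(2)[OF that] assms(3)[OF that] assms(4) by (auto intro!: power_mono)
  show "lo\<^sup>2 * (\<Sum>m\<in>I. \<Sum>n\<in>I. (cmod (X m n))\<^sup>2) \<le> (\<Sum>m\<in>I. \<Sum>n\<in>I. (cmod (X m n))\<^sup>2 * (d n)\<^sup>2)"
    unfolding sum_distrib_left by (intro sum_mono) (metis a(1) mult.commute mult_right_mono zero_le_power2)
  show "(\<Sum>m\<in>I. \<Sum>n\<in>I. (cmod (X m n))\<^sup>2 * (d n)\<^sup>2) \<le> hi\<^sup>2 * (\<Sum>m\<in>I. \<Sum>n\<in>I. (cmod (X m n))\<^sup>2)"
    unfolding sum_distrib_left by (intro sum_mono) (metis a(2) mult.commute mult_right_mono zero_le_power2)
qed

lemma condL_eq:
  assumes Ns: "Ns \<ge> 2*K+1" and Nr: "Nr \<ge> 2*K+1"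
  shows "condL k0 R z0 K Ns Nr = (MAX n \<in> {-int K..int K}. cmod (dcoef k0 R n)) / (MIN n \<in> {-int K..int K}. cmod (dcoef k0 R n))"
proof -
  define I where "I = {-int K..int K}"
  define d where "d n = cmod (dcoef k0 R n)" for n
  define hi where "hi = (MAX n \<in> I. d n)"
  define lo where "lo = (MIN n \<in> I. d n)"
  define c where "c = sqrt (real Ns * real Nr)"
  have fI: "finite I" and neI: "I \<noteq> {}" unfolding I_def by auto
  have hi: "d n \<le> hi" if "n \<in> I" for n unfolding hi_def using fI that by auto
  have lo: "lo \<le> d n" if "n \<in> I" for n unfolding lo_def using fI that by auto
  have lo0: "lo \<ge> 0" unfolding lo_def d_def using fI neI by auto
  have hi0: "hi \<ge> 0" using lo0 lo hi neI by force
  have c0: "c > 0" unfolding c_def using Ns Nr by auto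
  define P where "P X = (\<Sum>m\<in>I. \<Sum>n\<in>I. (cmod (X m n))\<^sup>2)" for X :: "int \<Rightarrow> int \<Rightarrow> complex"
  define Q where "Q X = (\<Sum>m\<in>I. \<Sum>n\<in>I. (cmod (X m n))\<^sup>2 * (d n)\<^sup>2)" for X :: "int \<Rightarrow> int \<Rightarrow> complex"
  have rat: "frob {0..<int Ns} {0..<int Nr} (Lop k0 R z0 K Ns Nr X) / frob I I X = c * sqrt (Q X) / sqrt (P X)" for X
    unfolding frob_def Lop_sq[OF Ns Nr] c_def P_def Q_def I_def d_def by (simp add: real_sqrt_mult)
  have frX: "frob I I X = sqrt (P X)" for X unfolding frob_def P_def ..
  have P0: "P X \<ge> 0" for X unfolding P_def by (intro sum_nonneg) auto
  have bnd: "c * lo \<le> c * sqrt (Q X) / sqrt (P X) \<and> c * sqrt (Q X) / sqrt (P X) \<le> c * hi" if "sqrt (P X) \<noteq> 0" for X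
  proof -
    have Pp: "sqrt (P X) > 0" using that P0[of X] by simp
    note sb = sum_sq_bounds[where X = X and d = d and I = I and lo = lo and hi = hi, OF fI lo hi lo0, folded P_def Q_def]
    have "sqrt (lo\<^sup>2 * P X) \<le> sqrt (Q X)" "sqrt (Q X) \<le> sqrt (hi\<^sup>2 * P X)" using sb by auto
    hence "lo * sqrt (P X) \<le> sqrt (Q X)" "sqrt (Q X) \<le> hi * sqrt (P X)"
      using lo0 hi0 by (auto simp: real_sqrt_mult)
    then show ?thesis using Pp c0 by (auto simp: field_simps)
  qed
  obtain n1 where n1: "n1 \<in> I" "d n1 = hi" unfolding hi_def using fI neI
    by (metis (mono_tags, lifting) Max_in finite_imageI image_iff image_is_empty)
  obtain n2 where n2: "n2 \<in> I" "d n2 = lo" unfolding lo_def using fI neI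
    by (metis (mono_tags, lifting) Min_in finite_imageI image_iff image_is_empty)
  define E where "E j = (\<lambda>m n. if m = j \<and> n = j then (1::complex) else 0)" for j :: int
  have PE: "P (E j) = 1" if "j \<in> I" for j
  proof -
    have "(cmod (E j m n))\<^sup>2 = (if m = j then (if n = j then 1 else 0) else 0)" for m n
      unfolding E_def by auto
    then have "P (E j) = (\<Sum>m\<in>I. if m = j then (\<Sum>n\<in>I. if n = j then 1 else 0) else 0)"
      unfolding P_def by (intro sum.cong) auto
    then show ?thesis using that fI by simp
  qed
  have QE: "Q (E j) = (d j)\<^sup>2" if "j \<in> I" for j
  proof -
    have "(cmod (E j m n))\<^sup>2 * (d n)\<^sup>2 = (if m = j then (if n = j then (d j)\<^sup>2 else 0) else 0)" for m n
      unfolding E_def by auto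
    then have "Q (E j) = (\<Sum>m\<in>I. if m = j then (\<Sum>n\<in>I. if n = j then (d j)\<^sup>2 else 0) else 0)"
      unfolding Q_def by (intro sum.cong) auto
    then show ?thesis using that fI by simp
  qed
  have memE: "c * d j \<in> Lratios k0 R z0 K Ns Nr" if "j \<in> I" for j
  proof -
    have "c * d j = frob {0..<int Ns} {0..<int Nr} (Lop k0 R z0 K Ns Nr (E j)) / frob I I (E j)"
      unfolding rat PE[OF that] QE[OF that] d_def by simp
    moreover have "frob I I (E j) \<noteq> 0" unfolding frX PE[OF that] by simp
    ultimately show ?thesis unfolding Lratios_def I_def by blast
  qed
  have all: "c * lo \<le> y \<and> y \<le> c * hi" if "y \<in> Lratios k0 R z0 K Ns Nr" for y
  proof -
    from that obtain X where "y = frob {0..<int Ns} {0..<int Nr} (Lop k0 R z0 K Ns Nr X) / frob I I X" "frob I I X \<noteq> 0"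
      unfolding Lratios_def I_def by blast
    then show ?thesis using bnd[of X] rat[of X] frX[of X] by auto
  qed
  have S: "Sup (Lratios k0 R z0 K Ns Nr) = c * hi"
    by (rule cSup_eq_maximum) (use memE[OF n1(1)] n1(2) all in auto)
  have Iq: "Inf (Lratios k0 R z0 K Ns Nr) = c * lo"
    by (rule cInf_eq_minimum) (use memE[OF n2(1)] n2(2) all in auto)
  show ?thesis unfolding condL_def S Iq using c0 unfolding hi_def lo_def d_def I_def by simp
qed


lemma cmod_dcoef: "cmod (dcoef k0 R n) = cmod (hankel1 n (k0*R)) / 4"
  unfolding dcoef_def norm_mult by simp

lemma d_upper:
  assumes x: "k0 * R > 0"
  shows "cmod (dcoef k0 R n) \<le> 1/2 + exp (k0*R/2) * exp 1 * (2 * real (max 1 (nat \<bar>n\<bar>)) / (exp 1 * (k0*R))) ^ (max 1 (nat \<bar>n\<bar>))"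
proof -
  have "cmod (hankel1 n (k0*R)) \<le> \<bar>besselJ n (k0*R)\<bar> + \<bar>besselY n (k0*R)\<bar>"
    using cmod_le[of "hankel1 n (k0*R)"] unfolding hankel1_def by simp
  then show ?thesis unfolding cmod_dcoef using besselJ_bound[of n "k0*R"] besselY_upper[OF x, of n] by simp
qed

lemma d_lower:
  assumes x: "k0 * R > 0" and n: "\<bar>real_of_int n\<bar> \<ge> 2 * pi * exp (k0*R * sinh 2)"
  shows "cmod (dcoef k0 R n) \<ge> 1/4"
proof -
  have "\<bar>besselY n (k0*R)\<bar> \<le> cmod (hankel1 n (k0*R))"
    using abs_Im_le_cmod[of "hankel1 n (k0*R)"] unfolding hankel1_def by simp
  then show ?thesis unfolding cmod_dcoef using besselY_lower[OF x n] by simp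
qed

lemma q_mono:
  fixes y :: real
  assumes y: "y > 0" and m: "1 \<le> m" "m \<le> K" and qK: "2 * real K / y \<ge> 1"
  shows "(2 * real m / y) ^ m \<le> (2 * real K / y) ^ K"
proof (cases "2 * real m / y \<le> 1")
  case True
  have "(2 * real m / y) ^ m \<le> 1" using True y by (intro power_le_one) auto
  also have "1 \<le> (2 * real K / y) ^ K" using qK by (rule one_le_power)
  finally show ?thesis .
next
  case False
  have "(2 * real m / y) ^ m \<le> (2 * real K / y) ^ m"
    using False y m by (intro power_mono divide_right_mono) auto
  also have "\<dots> \<le> (2 * real K / y) ^ K" using qK m by (intro power_increasing) auto
  finally show ?thesis .
qed

theorem mainTheorem8:
  fixes k0 R :: real
  assumes "k0 > 0" and "R > 0"
  shows "\<exists>C > 0. \<exists>K0. \<forall>K \<ge> K0. \<forall>Ns Nr. \<forall>z0 :: real \<times> real.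
           Ns \<ge> 2 * K + 1 \<longrightarrow> Nr \<ge> 2 * K + 1 \<longrightarrow>
           condL k0 R z0 K Ns Nr
             = (MAX n \<in> {-int K..int K}. cmod (dcoef k0 R n))
               / (MIN n \<in> {-int K..int K}. cmod (dcoef k0 R n))
         \<and> (MAX n \<in> {-int K..int K}. cmod (dcoef k0 R n))
               / (MIN n \<in> {-int K..int K}. cmod (dcoef k0 R n))
             \<le> C * ((2 / (exp 1 * k0 * R)) * real K) ^ K"
proof -
  define x where "x = k0 * R"
  have x0: "x > 0" unfolding x_def using assms by simp
  define d where "d n = cmod (dcoef k0 R n)" for n
  define A where "A = exp (x/2) * exp 1"
  define B where "B = 1/2 + A"
  have A0: "A > 0" unfolding A_def by simp
  have B0: "B > 0" unfolding B_def using A0 by simp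
  define f where "f K = ((2 / (exp 1 * k0 * R)) * real K) ^ K" for K :: nat
  define N0 where "N0 = nat \<lceil>2 * pi * exp (x * sinh 2)\<rceil>"
  define J where "J = {-int N0..int N0}"
  define c0 where "c0 = min (1/4) (MIN n \<in> J. d n)"
  define K0 where "K0 = max N0 (max 1 (nat \<lceil>exp 1 * x / 2\<rceil>))"
  have fJ: "finite J" and neJ: "J \<noteq> {}" unfolding J_def by auto
  have d0: "d n \<ge> 0" for n unfolding d_def by simp
  have low: "d n \<ge> 1/4" if "\<bar>n\<bar> \<ge> int N0" for n
  proof -
    have "2 * pi * exp (x * sinh 2) \<le> real N0" unfolding N0_def by linarith
    also have "\<dots> \<le> \<bar>real_of_int n\<bar>" using that by linarith
    finally show ?thesis unfolding d_def using d_lower[of k0 R n] x0 unfolding x_def by simp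
  qed
  have fK: "f K = (2 * real K / (exp 1 * x)) ^ K" for K unfolding f_def x_def by (simp add: field_simps)
  have fK0: "f K \<ge> 0" for K unfolding fK using x0 by simp
  have KK: "K \<ge> 1" "2 * real K / (exp 1 * x) \<ge> 1" "K \<ge> N0" if "K \<ge> K0" for K
  proof -
    show "K \<ge> 1" "K \<ge> N0" using that unfolding K0_def by auto
    have "exp 1 * x / 2 \<le> real K" using that unfolding K0_def by linarith
    then show "2 * real K / (exp 1 * x) \<ge> 1" using x0 by (simp add: field_simps)
  qed
  have fge1: "f K \<ge> 1" if "K \<ge> K0" for K unfolding fK using KK(2)[OF that] by (rule one_le_power)
  have up: "d n \<le> B * f K" if "K \<ge> K0" "n \<in> {-int K..int K}" for K n
  proof -
    define m where "m = max 1 (nat \<bar>n\<bar>)"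
    have m: "1 \<le> m" "m \<le> K" unfolding m_def using that KK(1)[OF that(1)] by auto
    have "d n \<le> 1/2 + A * (2 * real m / (exp 1 * x)) ^ m"
      unfolding d_def A_def m_def x_def using d_upper[of k0 R n] x0 unfolding x_def by (simp add: mult.assoc)
    also have "\<dots> \<le> 1/2 + A * f K" unfolding fK
      using q_mono[of "exp 1 * x" m K] x0 m KK(2)[OF that(1)] A0 by (intro add_left_mono mult_left_mono) auto
    also have "\<dots> \<le> B * f K" unfolding B_def using fge1[OF that(1)] by (simp add: algebra_simps)
    finally show ?thesis .
  qed
  have Dmax: "(MAX n \<in> {-int K..int K}. d n) \<le> B * f K" if "K \<ge> K0" for K
    using up[OF that] by (subst Max_le_iff) auto
  have Dmax0: "(MAX n \<in> {-int K..int K}. d n) \<ge> 0" for K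
    using d0 by (subst Max_ge_iff) auto
  have Dmin0: "(MIN n \<in> {-int K..int K}. d n) \<ge> 0" for K
    using d0 by (subst Min_ge_iff) auto
  have main: "\<exists>C > 0. \<forall>K \<ge> K0. (MAX n \<in> {-int K..int K}. d n) / (MIN n \<in> {-int K..int K}. d n) \<le> C * f K"
  proof (cases "c0 > 0")
    case True
    show ?thesis
    proof (intro exI[of _ "B / c0"] conjI allI impI)
      show "B / c0 > 0" using B0 True by simp
      fix K assume K: "K \<ge> K0"
      have "c0 \<le> d n" if "n \<in> {-int K..int K}" for n
      proof (cases "\<bar>n\<bar> \<ge> int N0")
        case True then show ?thesis using low[of n] unfolding c0_def by linarith
      next
        case False
        then have "n \<in> J" unfolding J_def by auto
        then have "(MIN n \<in> J. d n) \<le> d n" using fJ by simp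
        then show ?thesis unfolding c0_def by linarith
      qed
      then have Dmin: "c0 \<le> (MIN n \<in> {-int K..int K}. d n)" by (subst Min_ge_iff) auto
      have "(MAX n \<in> {-int K..int K}. d n) / (MIN n \<in> {-int K..int K}. d n) \<le> (B * f K) / c0"
        using Dmax[OF K] Dmin True Dmax0[of K] B0 fK0[of K] by (intro frac_le) auto
      then show "(MAX n \<in> {-int K..int K}. d n) / (MIN n \<in> {-int K..int K}. d n) \<le> B / c0 * f K" by simp
    qed
  next
    case False
    obtain n0 where n0: "n0 \<in> J" "d n0 = (MIN n \<in> J. d n)"
      using fJ neJ by (metis (mono_tags, lifting) Min_in finite_imageI image_iff image_is_empty)
    have "d n0 \<le> 0" using False n0(2) unfolding c0_def by linarith
    then have dn0: "d n0 = 0" using d0[of n0] by simp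
    show ?thesis
    proof (intro exI[of _ "1::real"] conjI allI impI)
      fix K assume K: "K \<ge> K0"
      have "n0 \<in> {-int K..int K}" using n0(1) KK(3)[OF K] unfolding J_def by auto
      then have "(MIN n \<in> {-int K..int K}. d n) \<le> 0" using dn0 by (subst Min_le_iff) (auto intro!: bexI[of _ n0])
      then have "(MIN n \<in> {-int K..int K}. d n) = 0" using Dmin0[of K] by linarith
      then show "(MAX n \<in> {-int K..int K}. d n) / (MIN n \<in> {-int K..int K}. d n) \<le> 1 * f K" using fK0[of K] by simp
    qed simp
  qed
  then obtain C where C: "C > 0" "\<forall>K \<ge> K0. (MAX n \<in> {-int K..int K}. d n) / (MIN n \<in> {-int K..int K}. d n) \<le> C * f K"
    by blast
  show ?thesis
  proof (intro exI[of _ C] conjI C(1) exI[of _ K0] allI impI)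
    fix K Ns Nr and z0 :: "real \<times> real"
    assume K: "K \<ge> K0" and Ns: "Ns \<ge> 2 * K + 1" and Nr: "Nr \<ge> 2 * K + 1"
    show "condL k0 R z0 K Ns Nr = (MAX n \<in> {-int K..int K}. cmod (dcoef k0 R n)) / (MIN n \<in> {-int K..int K}. cmod (dcoef k0 R n))"
      by (rule condL_eq[OF Ns Nr])
    show "(MAX n \<in> {-int K..int K}. cmod (dcoef k0 R n)) / (MIN n \<in> {-int K..int K}. cmod (dcoef k0 R n))
             \<le> C * ((2 / (exp 1 * k0 * R)) * real K) ^ K"
      using C(2) K unfolding d_def f_def by blast
  qed
qed

end
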